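(* Let $\nu<0$. As a function of $\lambda\in(\nu^2,+\infty)$, $\theta_{\lambda,\nu}$ is strictly increasing, with $\lim_{\lambda\to(\nu^2)^+}\theta_{\lambda,\nu}=-\infty$ and $\lim_{\lambda\to+\infty}\theta_{\lambda,\nu}=+\infty$. Moreover, for every $\lambda>\nu^2$, $\frac{1}{2\pi}\Big(\ln(\sqrt\lambda+\nu)-\frac{2\sqrt\lambda}{\sqrt\lambda+\nu}+2\gamma\Big)\le\theta_{\lambda,\nu}\le\frac{1}{2\pi}\Big(\ln(\sqrt\lambda+\nu)-\frac{\sqrt\lambda}{\sqrt\lambda+\nu}+2\gamma\Big)$.
   Context: $\theta_{\lambda,\nu}=\frac{1}{2\pi}\big(\psi(\frac12+\frac{\nu}{2\sqrt\lambda})+2\gamma+\ln(2\sqrt\lambda)\big)$, where $\psi=\Gamma'/\Gamma$ is the digamma function and $\gamma$ the Euler–Mascheroni constant. *)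

theory Defs
  imports "HOL-Analysis.Analysis"
begin

definition theta :: "real \<Rightarrow> real \<Rightarrow> real" where
  "theta lam nu = (1 / (2 * pi)) *
     (Digamma (1/2 + nu / (2 * sqrt lam)) + 2 * euler_mascheroni + ln (2 * sqrt lam))"

end

theory Submission imports Defs "HOL-Real_Asymp.Real_Asymp" begin

lemma ln_lower_aux:
  fixes a :: real assumes "a > 0" shows "1/(a+1) \<le> ln (a+1) - ln a"
proof -
  have "ln (a/(a+1)) \<le> a/(a+1) - 1" using assms by (intro ln_le_minus_one) auto
  moreover have "ln (a/(a+1)) = ln a - ln (a+1)" using assms by (simp add: ln_div)
  moreover have "a/(a+1) - 1 = - (1/(a+1))" using assms by (simp add: field_simps)
  ultimately show ?thesis by linarith
qed

lemma ln_upper_t: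
  fixes t :: real assumes "t \<ge> 0" shows "ln (1+t) \<le> t*(2+t)/(2*(1+t))"
proof -
  let ?g = "\<lambda>t::real. t*(2+t)/(2*(1+t)) - ln (1+t)"
  have "?g 0 \<le> ?g t"
  proof (rule DERIV_nonneg_imp_nondecreasing[OF assms])
    fix x :: real assume x: "0 \<le> x" "x \<le> t"
    have x1: "1 + x > 0" using x by simp
    let ?D = "((2 * x + 2) * (2 + 2 * x) - x * (2 + x) * 2) / ((2 + 2 * x) * (2 + 2 * x)) - 1 / (1 + x)"
    have "(?g has_real_derivative ?D) (at x)"
      using x by (auto intro!: derivative_eq_intros simp: x1)
    moreover have "?D = x^2/(2*(1+x)^2)"
    proof -
      have e: "(2 + 2 * x) * (2 + 2 * x) = 4*(1+x)^2" by (simp add: power2_eq_square algebra_simps)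
      have e2: "(2 * x + 2) * (2 + 2 * x) - x * (2 + x) * 2 = 4 + 4*x + 2*x^2"
        by (simp add: power2_eq_square algebra_simps)
      have nz: "(1+x) \<noteq> 0" using x1 by simp
      show ?thesis unfolding e e2 using nz
        by (simp add: divide_simps) (simp add: power2_eq_square algebra_simps)
    qed
    ultimately show "\<exists>y. (?g has_real_derivative y) (at x) \<and> 0 \<le> y"
      by (intro exI[of _ "?D"]) auto
  qed
  then show ?thesis by simp
qed

lemma ln_upper_aux:
  fixes a :: real assumes "a > 0" shows "ln (a+1) - ln a \<le> (1/a + 1/(a+1))/2"
proof -
  have "ln (1 + 1/a) \<le> (1/a)*(2+1/a)/(2*(1+1/a))" using assms by (intro ln_upper_t) auto
  moreover have "ln (1 + 1/a) = ln (a+1) - ln a"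
  proof -
    have "1 + 1/a = (a+1)/a" using assms by (simp add: field_simps)
    then show ?thesis using assms by (simp add: ln_div)
  qed
  moreover have "(1/a)*(2+1/a)/(2*(1+1/a)) = (1/a + 1/(a+1))/2" using assms
    by (simp add: divide_simps)
  ultimately show ?thesis by linarith
qed

lemma S_upper:
  fixes x :: real assumes "x > 0"
  shows "(\<Sum>n<m. inverse (x + real n)) \<le> 1/x - 1/(x + real m) + ln (x + real m) - ln x"
proof (induction m)
  case 0 then show ?case by simp
next
  case (Suc m)
  have "1/(x + real m + 1) \<le> ln (x + real m + 1) - ln (x + real m)"
    using ln_lower_aux[of "x + real m"] assms by simp
  with Suc show ?case by (simp add: inverse_eq_divide algebra_simps)
qed

lemma S_lower:
  fixes x :: real assumes "x > 0"
  shows "2*(ln (x + real m) - ln x) + 1/x - 1/(x + real m) \<le> 2*(\<Sum>n<m. inverse (x + real n))"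
proof (induction m)
  case 0 then show ?case by simp
next
  case (Suc m)
  have h: "ln (x + real m + 1) - ln (x + real m) \<le> (1/(x + real m) + 1/(x + real m + 1))/2"
    using ln_upper_aux[of "x + real m"] assms by simp
  have "(\<Sum>n<Suc m. inverse (x + real n)) = (\<Sum>n<m. inverse (x + real n)) + 1/(x + real m)"
    by (simp add: inverse_eq_divide)
  moreover have "x + real (Suc m) = x + real m + 1" by simp
  moreover have "2*(ln (x + real m + 1) - ln (x + real m)) \<le> 1/(x + real m) + 1/(x + real m + 1)"
    using h by simp
  ultimately show ?case using Suc.IH by (simp only:) argo
qed

lemma lim_aux:
  fixes x c :: real assumes "x > 0"
  shows "(\<lambda>m. ln (real m) - ln (x + real m) + c + d/(x+real m)) \<longlonglongrightarrow> c"
  using assms by real_asymp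

lemma lin_aux: "2*(A - B) + C - D \<le> 2*(S::real) \<Longrightarrow> L - S \<le> L - A + (B - C/2) + D/2"
  by argo

lemma Digamma_bounds:
  fixes x :: real assumes x: "x > 0"
  shows "ln x - 1/x \<le> Digamma x \<and> Digamma x \<le> ln x - 1/(2*x)"
proof -
  have D: "(\<lambda>m. ln (real m) - (\<Sum>n<m. inverse (x + real n))) \<longlonglongrightarrow> Digamma x"
    using Digamma_LIMSEQ[of x] x by simp
  have "ln x - 1/x \<le> Digamma x"
  proof (rule LIMSEQ_le[OF lim_aux[OF x, of "ln x - 1/x" 1] D])
    show "\<exists>N. \<forall>n\<ge>N. ln (real n) - ln (x + real n) + (ln x - 1 / x) + 1 / (x + real n)
        \<le> ln (real n) - (\<Sum>n<n. inverse (x + real n))"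
      using S_upper[OF x] by (intro exI[of _ 0]) (auto simp: algebra_simps)
  qed
  moreover have "Digamma x \<le> ln x - 1/(2*x)"
  proof (rule LIMSEQ_le[OF D lim_aux[OF x, of "ln x - 1/(2*x)" "1/2"]])
    show "\<exists>N. \<forall>n\<ge>N. ln (real n) - (\<Sum>n<n. inverse (x + real n)) \<le>
        ln (real n) - ln (x + real n) + (ln x - 1 / (2*x)) + (1/2) / (x + real n)"
    proof (intro exI[of _ 0] allI impI)
      fix n :: nat
      have "2*(ln (x + real n) - ln x) + 1/x - 1/(x + real n) \<le> 2*(\<Sum>n<n. inverse (x + real n))"
        by (rule S_lower[OF x])
      hence "ln (real n) - (\<Sum>n<n. inverse (x + real n)) \<le>
        ln (real n) - ln (x + real n) + (ln x - (1/x)/2) + (1/(x + real n))/2"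
        by (rule lin_aux)
      moreover have "1/(2*x) = (1/x)/2" "(1/2)/(x + real n) = (1/(x+real n))/2" by simp_all
      ultimately show "ln (real n) - (\<Sum>n<n. inverse (x + real n)) \<le>
        ln (real n) - ln (x + real n) + (ln x - 1 / (2*x)) + (1/2) / (x + real n)"
        by (simp only:)
    qed
  qed
  ultimately show ?thesis by blast
qed

lemma theta_bounds:
  fixes nu lam :: real assumes nu: "nu < 0" and lam: "lam > nu\<^sup>2"
  shows "(1 / (2 * pi)) * (ln (sqrt lam + nu) - 2 * sqrt lam / (sqrt lam + nu) + 2 * euler_mascheroni)
           \<le> theta lam nu
       \<and> theta lam nu
           \<le> (1 / (2 * pi)) * (ln (sqrt lam + nu) - sqrt lam / (sqrt lam + nu) + 2 * euler_mascheroni)"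
proof -
  define sq where "sq = sqrt lam"
  have "sqrt (nu\<^sup>2) < sq" unfolding sq_def using lam by (simp only: real_sqrt_less_iff)
  hence s1: "-nu < sq" using nu by simp
  hence s0: "sq > 0" "sq + nu > 0" using nu by linarith+
  define xx where "xx = 1/2 + nu/(2* sq)"
  have xe: "xx = (sq + nu)/(2* sq)" unfolding xx_def using s0 by (simp add: field_simps)
  have x0: "xx > 0" unfolding xe using s0 by simp
  have lnx: "ln xx + ln (2* sq) = ln (sq + nu)"
    unfolding xe using s0 by (simp add: ln_div ln_mult)
  have ix: "1/xx = 2* sq/(sq+nu)" unfolding xe using s0 by simp
  have ix2: "1/(2*xx) = sq/(sq+nu)" unfolding xe using s0 by (simp add: field_simps)
  have th: "theta lam nu = (1/(2*pi)) * (Digamma xx + 2*euler_mascheroni + ln (2* sq))"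
    unfolding theta_def xx_def sq_def by simp
  have B: "ln xx - 1/xx \<le> Digamma xx" "Digamma xx \<le> ln xx - 1/(2*xx)" using Digamma_bounds[OF x0] by auto
  have L: "ln (sq + nu) - 2* sq/(sq+nu) + 2*euler_mascheroni \<le> Digamma xx + 2*euler_mascheroni + ln (2* sq)"
    using B(1) lnx ix by linarith
  have U: "Digamma xx + 2*euler_mascheroni + ln (2* sq) \<le> ln (sq + nu) - sq/(sq+nu) + 2*euler_mascheroni"
    using B(2) lnx ix2 by linarith
  have p: "0 \<le> 1/(2*pi)" by simp
  show ?thesis unfolding th sq_def[symmetric]
    using mult_left_mono[OF L p] mult_left_mono[OF U p] by simp
qed


theorem mainTheorem7:
  fixes nu :: real
  assumes "nu < 0"
  shows "strict_mono_on {nu\<^sup>2<..} (\<lambda>lam. theta lam nu)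
    \<and> filterlim (\<lambda>lam. theta lam nu) at_bot (at_right (nu\<^sup>2))
    \<and> filterlim (\<lambda>lam. theta lam nu) at_top at_top
    \<and> (\<forall>lam > nu\<^sup>2.
         (1 / (2 * pi)) * (ln (sqrt lam + nu) - 2 * sqrt lam / (sqrt lam + nu) + 2 * euler_mascheroni)
           \<le> theta lam nu
       \<and> theta lam nu
           \<le> (1 / (2 * pi)) * (ln (sqrt lam + nu) - sqrt lam / (sqrt lam + nu) + 2 * euler_mascheroni))"
proof (intro conjI)
  note nu = assms
  have sqpos: "sqrt lam + nu > 0" if "lam > nu\<^sup>2" for lam
  proof -
    have "sqrt (nu\<^sup>2) < sqrt lam" using that by (simp only: real_sqrt_less_iff)
    thus ?thesis using nu by simp
  qed
  show bnds: "\<forall>lam > nu\<^sup>2.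
         (1 / (2 * pi)) * (ln (sqrt lam + nu) - 2 * sqrt lam / (sqrt lam + nu) + 2 * euler_mascheroni)
           \<le> theta lam nu
       \<and> theta lam nu
           \<le> (1 / (2 * pi)) * (ln (sqrt lam + nu) - sqrt lam / (sqrt lam + nu) + 2 * euler_mascheroni)"
    using theta_bounds[OF nu] by blast
  show "strict_mono_on {nu\<^sup>2<..} (\<lambda>lam. theta lam nu)"
  proof (rule strict_mono_onI)
    fix r t assume r: "r \<in> {nu\<^sup>2<..}" and t: "t \<in> {nu\<^sup>2<..}" and rt: "r < t"
    have r0: "sqrt r + nu > 0" "sqrt t + nu > 0" using sqpos r t by auto
    have srt: "sqrt r < sqrt t" using rt by simp
    have sr0: "sqrt r > 0" using r0 nu by linarith
    have xr: "1/2 + nu/(2 * sqrt r) > 0" using r0 sr0 by (simp add: field_simps)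
    have "nu/(2 * sqrt r) < nu/(2 * sqrt t)"
      using srt sr0 nu by (simp add: field_simps mult_less_cancel_left_neg)
    hence D: "Digamma (1/2 + nu/(2 * sqrt r)) < Digamma (1/2 + nu/(2 * sqrt t))"
      using xr by (intro Digamma_real_strict_mono) auto
    have "ln (2 * sqrt r) < ln (2 * sqrt t)" using srt sr0 by simp
    with D show "theta r nu < theta t nu"
      unfolding theta_def by (intro mult_strict_left_mono) auto
  qed
  show "filterlim (\<lambda>lam. theta lam nu) at_top at_top"
  proof (rule filterlim_at_top_mono)
    show "filterlim (\<lambda>lam. (1 / (2 * pi)) * (ln (sqrt lam + nu) - 2 * sqrt lam / (sqrt lam + nu) + 2 * euler_mascheroni)) at_top at_top"
      using nu by real_asymp
    show "\<forall>\<^sub>F lam in at_top. (1 / (2 * pi)) * (ln (sqrt lam + nu) - 2 * sqrt lam / (sqrt lam + nu) + 2 * euler_mascheroni) \<le> theta lam nu"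
      using eventually_gt_at_top[of "nu\<^sup>2"] by eventually_elim (use bnds in blast)
  qed
  show "filterlim (\<lambda>lam. theta lam nu) at_bot (at_right (nu\<^sup>2))"
  proof (rule filterlim_at_bot_mono)
    let ?V = "\<lambda>u. (1 / (2 * pi)) * (ln u - (u - nu) / u + 2 * euler_mascheroni)"
    have V0: "filterlim (\<lambda>u. ln u - (u - nu) / u + 2 * euler_mascheroni) at_bot (at_right 0)"
      using nu by real_asymp
    have V: "filterlim ?V at_bot (at_right 0)"
      by (rule filterlim_tendsto_pos_mult_at_bot[OF tendsto_const _ V0]) simp
    have "((\<lambda>lam. sqrt lam + nu) \<longlongrightarrow> sqrt (nu\<^sup>2) + nu) (at_right (nu\<^sup>2))"
      by (intro tendsto_intros)
    moreover have "sqrt (nu\<^sup>2) + nu = 0" using nu by simp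
    ultimately have "((\<lambda>lam. sqrt lam + nu) \<longlongrightarrow> 0) (at_right (nu\<^sup>2))" by simp
    moreover have "\<forall>\<^sub>F lam in at_right (nu\<^sup>2). 0 < sqrt lam + nu"
      using eventually_at_right_less[of "nu\<^sup>2"] by eventually_elim (rule sqpos)
    ultimately have g: "filterlim (\<lambda>lam. sqrt lam + nu) (at_right 0) (at_right (nu\<^sup>2))"
      by (rule tendsto_imp_filterlim_at_right)
    have "filterlim (\<lambda>lam. ?V (sqrt lam + nu)) at_bot (at_right (nu\<^sup>2))"
      by (rule filterlim_compose[OF V g])
    thus "filterlim (\<lambda>lam. (1 / (2 * pi)) * (ln (sqrt lam + nu) - sqrt lam / (sqrt lam + nu) + 2 * euler_mascheroni)) at_bot (at_right (nu\<^sup>2))"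
      by simp
    show "\<forall>\<^sub>F lam in at_right (nu\<^sup>2). theta lam nu \<le> (1 / (2 * pi)) * (ln (sqrt lam + nu) - sqrt lam / (sqrt lam + nu) + 2 * euler_mascheroni)"
      using eventually_at_right_less[of "nu\<^sup>2"] by eventually_elim (use bnds in blast)
  qed
qed

end
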